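(* Let $k\ge 2$, $n\ge 1$. The reduction $\succ$ on $P_k^n$ is terminating (strongly normalizing), but it is not weakly confluent: there exist $f,r,v$ with $f\succ r$, $f\succ v$ such that there is no $w$ with $r\succeq w$ and $v\succeq w$.
   Context: $Z_k=\{0,1,\dots,k-1\}$; $P_k^n$ is the set of all maps $f:Z_k^n\to Z_k$ in the variables $x_1,\dots,x_n$. A variable $x_i$ is essential in $f$ if there are $a_1,\dots,a_n,b\in Z_k$ with $f(a_1,\dots,a_i,\dots,a_n)\ne f(a_1,\dots,a_{i-1},b,a_{i+1},\dots,a_n)$; $Ess(f)$ is the set of essential variables. For an essential variable $x_i$ of $f$ and $c\in Z_k$, the simple subfunction $f(x_i=c)$ is the function obtained by assigning $c$ to $x_i$ (regarded in $P_k^n$ with $x_i$ fictive); we write $f\succ g$ if $g=f(x_i=c)$ for some essential $x_i$ and $c\in Z_k$, and $\succeq$ denotes the reflexive-transitive closure of $\succ$. *)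

theory Defs
  imports Main
begin

text \<open>Z_k^n is modelled as lists of length n with entries < k; variable x_i (1-based)
 corresponds to list index i-1. A function of P_k^n is a map on nat lists that takes
 values < k on the domain and is 0 (canonically) outside, so HOL equality is
 equality of functions on Z_k^n.\<close>

definition Zdom :: "nat \<Rightarrow> nat \<Rightarrow> nat list set" where
  "Zdom k n = {xs. length xs = n \<and> set xs \<subseteq> {..<k}}"

definition Pkn :: "nat \<Rightarrow> nat \<Rightarrow> (nat list \<Rightarrow> nat) set" where
  "Pkn k n = {f. (\<forall>xs\<in>Zdom k n. f xs < k) \<and> (\<forall>xs. xs \<notin> Zdom k n \<longrightarrow> f xs = 0)}"

definition essential :: "nat \<Rightarrow> nat \<Rightarrow> (nat list \<Rightarrow> nat) \<Rightarrow> nat \<Rightarrow> bool" where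
  "essential k n f i \<longleftrightarrow> i < n \<and>
     (\<exists>a\<in>Zdom k n. \<exists>b<k. f a \<noteq> f (a[i := b]))"

definition assign :: "nat \<Rightarrow> nat \<Rightarrow> (nat list \<Rightarrow> nat) \<Rightarrow> nat \<Rightarrow> nat \<Rightarrow> (nat list \<Rightarrow> nat)" where
  "assign k n f i c = (\<lambda>xs. if xs \<in> Zdom k n then f (xs[i := c]) else 0)"

definition red :: "nat \<Rightarrow> nat \<Rightarrow> (nat list \<Rightarrow> nat) \<Rightarrow> (nat list \<Rightarrow> nat) \<Rightarrow> bool" where
  "red k n f g \<longleftrightarrow> f \<in> Pkn k n \<and>
     (\<exists>i c. essential k n f i \<and> c < k \<and> g = assign k n f i c)"

end

theory Submission
  imports Defs
begin

lemma upd_Zdom: "a \<in> Zdom k n \<Longrightarrow> b < k \<Longrightarrow> a[j := b] \<in> Zdom k n"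
  unfolding Zdom_def using set_update_subset_insert by fastforce

lemma red_ess_sub:
  assumes "red k n f g"
  shows "{j. essential k n g j} \<subset> {j. essential k n f j}"
proof -
  obtain i c where ei: "essential k n f i" and c: "c < k" and g: "g = assign k n f i c"
    using assms unfolding red_def by blast
  have sub: "essential k n f j" if ej: "essential k n g j" for j
  proof -
    obtain a b where a: "a \<in> Zdom k n" and b: "b < k" and jn: "j < n"
      and ne: "g a \<noteq> g (a[j := b])" using ej unfolding essential_def by blast
    have a2: "a[j := b] \<in> Zdom k n" using upd_Zdom a b by blast
    have ne2: "f (a[i := c]) \<noteq> f ((a[j := b])[i := c])"
      using ne a a2 g unfolding assign_def by simp
    have "j \<noteq> i" using ne2 by auto
    hence "(a[j := b])[i := c] = (a[i := c])[j := b]" by (simp add: list_update_swap)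
    moreover have "a[i := c] \<in> Zdom k n" using upd_Zdom a c by blast
    ultimately show ?thesis using ne2 jn b unfolding essential_def by metis
  qed
  have "\<not> essential k n g i"
  proof
    assume "essential k n g i"
    then obtain a b where a: "a \<in> Zdom k n" and b: "b < k"
      and ne: "g a \<noteq> g (a[i := b])" unfolding essential_def by blast
    have a2: "a[i := b] \<in> Zdom k n" using upd_Zdom a b by blast
    show False using ne a a2 g unfolding assign_def by simp
  qed
  thus ?thesis using sub ei by blast
qed

lemma ess_finite: "finite {j. essential k n f j}"
  by (rule finite_subset[of _ "{..<n}"]) (auto simp: essential_def)

theorem theorem3:
  fixes k n :: nat
  assumes "k \<ge> 2" and "n \<ge> 1"
  shows "wf {(g, f). red k n f g}
    \<and> (\<exists>f r v. red k n f r \<and> red k n f v \<and>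
          \<not> (\<exists>w. (red k n)\<^sup>*\<^sup>* r w \<and> (red k n)\<^sup>*\<^sup>* v w))"
proof
  show "wf {(g, f). red k n f g}"
  proof (rule wf_subset[OF wf_measure[of "\<lambda>f. card {j. essential k n f j}"]])
    show "{(g, f). red k n f g} \<subseteq> measure (\<lambda>f. card {j. essential k n f j})"
    proof (clarsimp)
      fix g f assume "red k n f g"
      thus "card {j. essential k n g j} < card {j. essential k n f j}"
        by (intro psubset_card_mono[OF ess_finite] red_ess_sub)
    qed
  qed
next
  define f where "f = (\<lambda>xs::nat list. if xs \<in> Zdom k n then xs ! 0 else 0)"
  define C where "C = (\<lambda>c::nat. \<lambda>xs::nat list. if xs \<in> Zdom k n then c else 0)"
  define z where "z = replicate n (0::nat)"
  have z: "z \<in> Zdom k n" using assms by (simp add: z_def Zdom_def)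
  have z1: "z[0 := 1] \<in> Zdom k n" using upd_Zdom[OF z, of 1 0] assms by simp
  have n0: "0 < n" using assms by simp
  have fP: "f \<in> Pkn k n"
    unfolding Pkn_def f_def Zdom_def using n0
    by (auto, metis length_greater_0_conv lessThan_iff nth_mem subsetD)
  have ess: "essential k n f 0"
    unfolding essential_def using z z1 n0 assms
    by (intro conjI bexI[of _ z] exI[of _ 1]) (auto simp: f_def z_def)
  have asg: "assign k n f 0 c = C c" if ck: "c < k" for c
  proof (rule ext)
    fix xs show "assign k n f 0 c xs = C c xs"
    proof (cases "xs \<in> Zdom k n")
      case True
      hence "xs[0 := c] \<in> Zdom k n" "length xs = n" using upd_Zdom ck by (auto simp: Zdom_def)
      thus ?thesis using True n0 by (simp add: assign_def C_def f_def)
    qed (simp add: assign_def C_def)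
  qed
  have redC: "red k n f (C c)" if "c < k" for c
    unfolding red_def using fP ess that asg by metis
  have noess: "\<not> essential k n (C c) j" for c j
    unfolding essential_def C_def by (auto dest: upd_Zdom)
  have nf: "(red k n)\<^sup>*\<^sup>* (C c) w \<Longrightarrow> w = C c" for c w
    by (erule converse_rtranclpE) (auto simp: red_def noess)
  have "C 0 \<noteq> C 1" using z by (metis C_def zero_neq_one)
  thus "\<exists>f r v. red k n f r \<and> red k n f v \<and>
          \<not> (\<exists>w. (red k n)\<^sup>*\<^sup>* r w \<and> (red k n)\<^sup>*\<^sup>* v w)"
    using redC[of 0] redC[of 1] assms nf by (intro exI[of _ f] exI[of _ "C 0"] exI[of _ "C 1"]) auto
qed

end
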